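(* Let $\mathcal M$ satisfy Assumption (A), and let $h:\mathcal X\times\mathcal S\to\mathbb R$ be measurable. 1. $h$ is counterfactually fair if and only if for every $s,s'\in\mathcal S$ and $\pi^*_{\langle s'|s\rangle}$-almost every $(x,x')$, $h(x,s)=h(x',s')$. 2. If (RE) holds, $h$ is counterfactually fair if and only if for every $s,s'\in\mathcal S$ with $s<s'$ and $\pi^*_{\langle s'|s\rangle}$-almost every $(x,x')$, $h(x,s)=h(x',s')$. 3. If (I) holds, $h$ is counterfactually fair if and only if for every $s,s'\in\mathcal S$ and $\mu_s$-almost every $x$, $h(x,s)=h(T^*_{\langle s'|s\rangle}(x),s')$. 4. If (I) and (RE) hold, $h$ is counterfactually fair if and only if for every $s,s'\in\mathcal S$ with $s<s'$ and $\mu_s$-almost every $x$, $h(x,s)=h(T^*_{\langle s'|s\rangle}(x),s')$.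
   Context: Let $(\Omega,\mathcal A,\mathbb P)$ be a probability space. A structural causal model (SCM) $\mathcal M=\langle U,G\rangle$ consists of two disjoint finite index sets $\mathcal I$ (endogenous) and $\mathcal J$ (exogenous), measurable product spaces $\mathcal V=\prod_{i\in\mathcal I}\mathcal V_i\subseteq\mathbb R^{|\mathcal I|}$ and $\mathcal U=\prod_{j\in\mathcal J}\mathcal U_j\subseteq\mathbb R^{|\mathcal J|}$, a random vector $U:\Omega\to\mathcal U$ (its components need not be independent), and for each $i\in\mathcal I$ subsets $\mathrm{Endo}(i)\subseteq\mathcal I$, $\mathrm{Exo}(i)\subseteq\mathcal J$ (endogenous and exogenous parents) and a measurable map $G_i:\mathcal V_{\mathrm{Endo}(i)}\times\mathcal U_{\mathrm{Exo}(i)}\to\mathcal V_i$. A random vector $V:\Omega\to\mathcal V$ is a solution of $\mathcal M$ if $V_i=G_i(V_{\mathrm{Endo}(i)},U_{\mathrm{Exo}(i)})$ $\mathbb P$-a.s. for every $i\in\mathcal I$. The graph of $\mathcal M$ has nodes $\mathcal I\cup\mathcal J$ and an edge $k\to l$ iff $l\in\mathcal I$ and $k\in\mathrm{Endo}(l)\cup\mathrm{Exo}(l)$. Assumption (A): the graph of $\mathcal M$ is acyclic; then $\mathcal M$ has a solution, unique up to $\mathbb P$-null sets. For $I\subseteq\mathcal I$ and $v_I\in\mathcal V_I$, the do-intervention $\mathrm{do}(V_I=v_I)$ produces the model $\langle U,\tilde G\rangle$ with $\tilde G_i\equiv v_i$ for $i\in I$ and $\tilde G_i=G_i$ otherwise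 (same $U$); it is again acyclic, and its solution is denoted $V_{V_I=v_I}$. Standing setting: the solution is $V=(X,S)$ where $X:\Omega\to\mathcal X\subseteq\mathbb R^d$ and $S:\Omega\to\mathcal S$ with $\mathcal S\subset\mathbb R$ finite and $\mathbb P(S=s)>0$ for all $s\in\mathcal S$. $U_X$ denotes the vector of exogenous parents of the components of $X$, and $U_S$ that of $S$. For $s\in\mathcal S$, $X_{S=s}$ denotes the $X$-component of the solution of the model intervened by $\mathrm{do}(S=s)$. Notation: $\mu_s:=\mathcal L(X\mid S=s)$ with support $\mathcal X_s$; $\mu_{\langle s'|s\rangle}(\cdot\mid x):=\mathcal L(X_{S=s'}\mid X=x,S=s)$. The structural counterfactual coupling is $\pi^*_{\langle s'|s\rangle}:=\mathcal L\big((X,X_{S=s'})\mid S=s\big)$. Under (A) there is a measurable $F$ with $X=F(S,U_X)$ a.s. and $X_{S=s}=F(s,U_X)$ a.s. for every $s$; set $f_s(u):=F(s,u)$. Assumption (I): the functions $\{f_s\}_{s\in\mathcal S}$ are injective; under (I), $T^*_{\langle s'|s\rangle}:=f_{s'}\circ f_s^{-1}|_{\mathcal X_s}$. Assumption (RE): $U_S$ is independent of $U_X$, and no component of $X$ is an endogenous parent of $S$. Counterfactual fairness: a predictor $\hat Y=h(X,S)$ is counterfactually fair if for every $s,s'\in\mathcal S$ and $\mu_s$-almost every $x\in\mathcal X_s$, $\mathcal L(\hat Y_{S=s}\mid X=x,S=s)=\mathcal L(\hat Y_{S=s'}\mid X=x,S=s)$, where $\hat Y_{S=s}:=h(X_{S=s},s)$.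 *)

theory Defs
  imports "HOL-Probability.Probability"
begin

text \<open>Endogenous nodes: type 'i (finite); exogenous nodes: type 'j (finite).
  Endogenous values are real vectors, U is a random vector of exogenous values,
  component j living in the Borel set Usp j.  The structural map of node i is
  G i :: (endogenous vector) => (exogenous vector) => real, required to depend
  only on the coordinates in Endo i and Exo i (so it is a map on
  V_Endo(i) x U_Exo(i)).\<close>

definition depends_on_parents ::
  "('i \<Rightarrow> 'i set) \<Rightarrow> ('i \<Rightarrow> 'j set) \<Rightarrow> ('i \<Rightarrow> ('i \<Rightarrow> real) \<Rightarrow> ('j \<Rightarrow> real) \<Rightarrow> real) \<Rightarrow> bool" where
  "depends_on_parents Endo Exo G \<longleftrightarrow>
     (\<forall>i v v' u u'. (\<forall>k\<in>Endo i. v k = v' k) \<longrightarrow> (\<forall>j\<in>Exo i. u j = u' j) \<longrightarrow> G i v u = G i v' u')"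

definition is_SCM ::
  "'w measure \<Rightarrow> ('j::finite \<Rightarrow> real set) \<Rightarrow> ('w \<Rightarrow> 'j \<Rightarrow> real) \<Rightarrow> ('i::finite \<Rightarrow> 'i set) \<Rightarrow> ('i \<Rightarrow> 'j set)
    \<Rightarrow> ('i \<Rightarrow> ('i \<Rightarrow> real) \<Rightarrow> ('j \<Rightarrow> real) \<Rightarrow> real) \<Rightarrow> bool" where
  "is_SCM P Usp U Endo Exo G \<longleftrightarrow>
     prob_space P \<and>
     (\<forall>j. Usp j \<in> sets borel) \<and>
     U \<in> measurable P (PiM UNIV (\<lambda>_. borel)) \<and>
     (\<forall>\<omega>\<in>space P. \<forall>j. U \<omega> j \<in> Usp j) \<and>
     (\<forall>i. (\<lambda>(v, u). G i v u) \<in> borel_measurable (PiM UNIV (\<lambda>_. borel) \<Otimes>\<^sub>M PiM UNIV (\<lambda>_. borel))) \<and>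
     depends_on_parents Endo Exo G"

definition scm_graph :: "('i \<Rightarrow> 'i set) \<Rightarrow> ('i \<Rightarrow> 'j set) \<Rightarrow> ('i + 'j) rel" where
  "scm_graph Endo Exo =
     {(Inl k, Inl l) | k l. k \<in> Endo l} \<union> {(Inr j, Inl l) | j l. j \<in> Exo l}"

definition assumption_A :: "('i \<Rightarrow> 'i set) \<Rightarrow> ('i \<Rightarrow> 'j set) \<Rightarrow> bool" where
  "assumption_A Endo Exo \<longleftrightarrow> acyclic (scm_graph Endo Exo)"

definition is_solution ::
  "'w measure \<Rightarrow> ('w \<Rightarrow> 'j \<Rightarrow> real) \<Rightarrow> ('i \<Rightarrow> ('i \<Rightarrow> real) \<Rightarrow> ('j \<Rightarrow> real) \<Rightarrow> real)
     \<Rightarrow> ('w \<Rightarrow> 'i \<Rightarrow> real) \<Rightarrow> bool" where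
  "is_solution P U G V \<longleftrightarrow>
     V \<in> measurable P (PiM UNIV (\<lambda>_. borel)) \<and>
     (\<forall>i. AE \<omega> in P. V \<omega> i = G i (V \<omega>) (U \<omega>))"

definition do_intervention ::
  "('i \<Rightarrow> ('i \<Rightarrow> real) \<Rightarrow> ('j \<Rightarrow> real) \<Rightarrow> real) \<Rightarrow> 'i set \<Rightarrow> ('i \<Rightarrow> real)
     \<Rightarrow> ('i \<Rightarrow> ('i \<Rightarrow> real) \<Rightarrow> ('j \<Rightarrow> real) \<Rightarrow> real)" where
  "do_intervention G I v = (\<lambda>i vv uu. if i \<in> I then v i else G i vv uu)"

section \<open>Standing setting: endogenous nodes 'n option, None = S, Some i = X_i\<close>

definition MX :: "('n \<Rightarrow> real) measure" where
  "MX = PiM UNIV (\<lambda>_. borel)"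

definition Xof :: "('w \<Rightarrow> 'n option \<Rightarrow> real) \<Rightarrow> 'w \<Rightarrow> 'n \<Rightarrow> real" where
  "Xof V \<omega> = (\<lambda>i. V \<omega> (Some i))"

definition Sof :: "('w \<Rightarrow> 'n option \<Rightarrow> real) \<Rightarrow> 'w \<Rightarrow> real" where
  "Sof V \<omega> = V \<omega> None"

definition do_S ::
  "('n option \<Rightarrow> ('n option \<Rightarrow> real) \<Rightarrow> ('j \<Rightarrow> real) \<Rightarrow> real) \<Rightarrow> real
     \<Rightarrow> ('n option \<Rightarrow> ('n option \<Rightarrow> real) \<Rightarrow> ('j \<Rightarrow> real) \<Rightarrow> real)" where
  "do_S G s = do_intervention G {None} (\<lambda>_. s)"

definition cond_S :: "'w measure \<Rightarrow> ('w \<Rightarrow> 'n option \<Rightarrow> real) \<Rightarrow> real \<Rightarrow> 'w measure" where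
  "cond_S P V s = uniform_measure P {\<omega> \<in> space P. Sof V \<omega> = s}"

definition mu :: "'w measure \<Rightarrow> ('w \<Rightarrow> 'n option \<Rightarrow> real) \<Rightarrow> real \<Rightarrow> ('n \<Rightarrow> real) measure" where
  "mu P V s = distr (cond_S P V s) MX (Xof V)"

text \<open>Structural counterfactual coupling pi*_<s'|s> = L((X, X_{S=s'}) | S = s);
  Vdo s' is the solution of the model intervened by do(S = s').\<close>
definition pi_star ::
  "'w measure \<Rightarrow> ('w \<Rightarrow> 'n option \<Rightarrow> real) \<Rightarrow> (real \<Rightarrow> 'w \<Rightarrow> 'n option \<Rightarrow> real) \<Rightarrow> real \<Rightarrow> real
     \<Rightarrow> (('n \<Rightarrow> real) \<times> ('n \<Rightarrow> real)) measure" where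
  "pi_star P V Vdo s s' = distr (cond_S P V s) (MX \<Otimes>\<^sub>M MX) (\<lambda>\<omega>. (Xof V \<omega>, Xof (Vdo s') \<omega>))"

definition cond_law_version ::
  "'w measure \<Rightarrow> ('w \<Rightarrow> 'x) \<Rightarrow> 'x measure \<Rightarrow> ('w \<Rightarrow> real) \<Rightarrow> ('x \<Rightarrow> real measure) \<Rightarrow> bool" where
  "cond_law_version Q Z MZ Y K \<longleftrightarrow>
     K \<in> measurable MZ (prob_algebra borel) \<and>
     (\<forall>A\<in>sets borel. \<forall>B\<in>sets MZ.
        emeasure Q {\<omega> \<in> space Q. Y \<omega> \<in> A \<and> Z \<omega> \<in> B}
          = (\<integral>\<^sup>+ z. indicator B z * emeasure (K z) A \<partial>(distr Q MZ Z)))"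

text \<open>Counterfactual fairness of hat Y = h(X,S): for all s, s' in the state space Ss
  and mu_s-a.e. x, L(hat Y_{S=s} | X = x, S = s) = L(hat Y_{S=s'} | X = x, S = s),
  where hat Y_{S=s} = h(X_{S=s}, s).  Conditional laws are expressed through
  (a.e. unique) versions of the regular conditional distribution given X under P(.|S=s).\<close>
definition cf_fair ::
  "'w measure \<Rightarrow> ('w \<Rightarrow> 'n option \<Rightarrow> real) \<Rightarrow> (real \<Rightarrow> 'w \<Rightarrow> 'n option \<Rightarrow> real) \<Rightarrow> real set
     \<Rightarrow> (('n \<Rightarrow> real) \<Rightarrow> real \<Rightarrow> real) \<Rightarrow> bool" where
  "cf_fair P V Vdo Ss h \<longleftrightarrow>
     (\<forall>s\<in>Ss. \<forall>s'\<in>Ss. \<exists>K K'.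
        cond_law_version (cond_S P V s) (Xof V) MX (\<lambda>\<omega>. h (Xof (Vdo s) \<omega>) s) K \<and>
        cond_law_version (cond_S P V s) (Xof V) MX (\<lambda>\<omega>. h (Xof (Vdo s') \<omega>) s') K' \<and>
        (AE x in mu P V s. K x = K' x))"

definition JX :: "('n option \<Rightarrow> 'j set) \<Rightarrow> 'j set" where
  "JX Exo = (\<Union>i. Exo (Some i))"

definition UX :: "('n option \<Rightarrow> 'j set) \<Rightarrow> ('w \<Rightarrow> 'j \<Rightarrow> real) \<Rightarrow> 'w \<Rightarrow> 'j \<Rightarrow> real" where
  "UX Exo U \<omega> = restrict (U \<omega>) (JX Exo)"

definition US :: "('n option \<Rightarrow> 'j set) \<Rightarrow> ('w \<Rightarrow> 'j \<Rightarrow> real) \<Rightarrow> 'w \<Rightarrow> 'j \<Rightarrow> real" where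
  "US Exo U \<omega> = restrict (U \<omega>) (Exo None)"

definition assumption_RE ::
  "'w measure \<Rightarrow> ('w \<Rightarrow> 'j \<Rightarrow> real) \<Rightarrow> ('n option \<Rightarrow> 'n option set) \<Rightarrow> ('n option \<Rightarrow> 'j set) \<Rightarrow> bool" where
  "assumption_RE P U Endo Exo \<longleftrightarrow>
     prob_space.indep_var P
        (PiM (Exo None) (\<lambda>_. borel)) (US Exo U)
        (PiM (JX Exo) (\<lambda>_. borel)) (UX Exo U) \<and>
     (\<forall>i. Some i \<notin> Endo None)"

text \<open>F is a measurable map with X = F(S, U_X) a.s. and X_{S=s} = F(s, U_X) a.s.
  for every s in Ss (the representation guaranteed under (A)).\<close>
definition F_rep ::
  "'w measure \<Rightarrow> ('w \<Rightarrow> 'j \<Rightarrow> real) \<Rightarrow> ('n option \<Rightarrow> 'j set) \<Rightarrow> ('w \<Rightarrow> 'n option \<Rightarrow> real)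
     \<Rightarrow> (real \<Rightarrow> 'w \<Rightarrow> 'n option \<Rightarrow> real) \<Rightarrow> real set \<Rightarrow> (real \<Rightarrow> ('j \<Rightarrow> real) \<Rightarrow> 'n \<Rightarrow> real) \<Rightarrow> bool" where
  "F_rep P U Exo V Vdo Ss F \<longleftrightarrow>
     (\<lambda>(s, u). F s u) \<in> measurable (borel \<Otimes>\<^sub>M PiM (JX Exo) (\<lambda>_. borel)) MX \<and>
     (AE \<omega> in P. Xof V \<omega> = F (Sof V \<omega>) (UX Exo U \<omega>)) \<and>
     (\<forall>s\<in>Ss. AE \<omega> in P. Xof (Vdo s) \<omega> = F s (UX Exo U \<omega>))"

definition assumption_I ::
  "('j \<Rightarrow> real set) \<Rightarrow> ('n option \<Rightarrow> 'j set) \<Rightarrow> real set \<Rightarrow> (real \<Rightarrow> ('j \<Rightarrow> real) \<Rightarrow> 'n \<Rightarrow> real) \<Rightarrow> bool" where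
  "assumption_I Usp Exo Ss F \<longleftrightarrow> (\<forall>s\<in>Ss. inj_on (F s) (PiE (JX Exo) Usp))"

definition T_star ::
  "('j \<Rightarrow> real set) \<Rightarrow> ('n option \<Rightarrow> 'j set) \<Rightarrow> (real \<Rightarrow> ('j \<Rightarrow> real) \<Rightarrow> 'n \<Rightarrow> real)
     \<Rightarrow> real \<Rightarrow> real \<Rightarrow> ('n \<Rightarrow> real) \<Rightarrow> 'n \<Rightarrow> real" where
  "T_star Usp Exo F s s' x = F s' (the_inv_into (PiE (JX Exo) Usp) (F s) x)"

end

theory Submission
  imports Defs
begin


lemma geom_partial: "(\<Sum>k<n. e / 2^(k+1)) = (e::real) - e / 2^n"
  by (induction n) (auto simp: field_simps)

lemma inner_approx:
  fixes M :: "'a::polish_space measure"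
  assumes sM: "sets M = sets borel" and fin: "finite_measure M"
    and B: "B \<in> sets borel" and e: "e > 0"
  shows "\<exists>K. K \<subseteq> B \<and> compact K \<and> measure M (B - K) < e"
proof -
  interpret finite_measure M by fact
  have fin': "emeasure M (space M) \<noteq> \<infinity>" by simp
  have BM: "B \<in> sets M" using B sM by simp
  show ?thesis
  proof (cases "measure M B < e")
    case True thus ?thesis by (intro exI[of _ "{}"]) auto
  next
    case False
    have eq: "emeasure M B = (SUP K \<in> {K. K \<subseteq> B \<and> compact K}. emeasure M K)"
      by (rule inner_regular[OF sM fin' B])
    have "ennreal (measure M B - e) < emeasure M B"
      using False e BM by (simp add: emeasure_eq_measure ennreal_lessI)
    then obtain K where K: "K \<subseteq> B" "compact K" "ennreal (measure M B - e) < emeasure M K"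
      unfolding eq less_SUP_iff by blast
    have KM: "K \<in> sets M" using K(2) sM by (simp add: borel_compact)
    have "measure M B - e < measure M K"
      using K(3) False e by (simp add: emeasure_eq_measure ennreal_less_iff)
    moreover have "measure M (B - K) = measure M B - measure M K"
      using K(1) KM BM by (simp add: finite_measure_Diff)
    ultimately show ?thesis using K by (intro exI[of _ K]) auto
  qed
qed

lemma lusin:
  fixes M :: "'a::polish_space measure" and f :: "'a \<Rightarrow> 'b::second_countable_topology"
  assumes sM: "sets M = sets borel" and fin: "finite_measure M"
    and f: "f \<in> borel_measurable borel" and e: "e > 0"
  shows "\<exists>K. closed K \<and> continuous_on K f \<and> measure M (UNIV - K) < e"
proof -
  interpret finite_measure M by fact
  obtain BB :: "'b set set" where BB: "countable BB" "topological_basis BB"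
    using ex_countable_basis by blast
  have "BB \<noteq> {}"
  proof
    assume "BB = {}"
    then have "open (UNIV::'b set) \<Longrightarrow> (UNIV::'b set) = {}"
      using BB(2) by (metis Union_empty subset_empty topological_basis_def)
    thus False by simp
  qed
  define b where "b = from_nat_into BB"
  have rb: "range b = BB" unfolding b_def using BB(1) \<open>BB \<noteq> {}\<close> by (metis range_from_nat_into)
  define A where "A k = f -` b k" for k
  have Ab: "A k \<in> sets borel" for k
  proof -
    have "open (b k)" using rb BB(2) topological_basis_open by blast
    then have "f -` b k \<inter> space borel \<in> sets borel" using f by (intro measurable_sets) auto
    thus ?thesis by (simp add: A_def)
  qed
  have "\<forall>k. \<exists>C. C \<subseteq> A k \<and> compact C \<and> measure M (A k - C) < e / 2^(k+3)"
    using inner_approx[OF sM fin Ab] e by simp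
  then obtain C where C: "\<And>k. C k \<subseteq> A k" "\<And>k. compact (C k)" "\<And>k. measure M (A k - C k) < e / 2^(k+3)"
    by metis
  have Ab': "- A k \<in> sets borel" for k using Ab[of k] by (metis borel_comp)
  have "\<forall>k. \<exists>C. C \<subseteq> - A k \<and> compact C \<and> measure M (- A k - C) < e / 2^(k+3)"
    using inner_approx[OF sM fin Ab'] e by simp
  then obtain C' where C': "\<And>k. C' k \<subseteq> - A k" "\<And>k. compact (C' k)" "\<And>k. measure M (- A k - C' k) < e / 2^(k+3)"
    by metis
  have CM: "C k \<in> sets M" "C' k \<in> sets M" "A k \<in> sets M" "- A k \<in> sets M" for k
    using C(2) C'(2) Ab Ab' sM by (auto simp: borel_compact)
  define K where "K = (\<Inter>k. C k \<union> C' k)"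
  have clK: "closed K" unfolding K_def using C(2) C'(2) by (intro closed_INT ballI closed_Un compact_imp_closed) auto
  define D where "D k = (A k - C k) \<union> (- A k - C' k)" for k
  have DM: "D k \<in> sets M" for k
    unfolding D_def sM using Ab Ab' C(2) C'(2) by (intro sets.Un sets.Diff) (auto simp: borel_compact)
  have Dle: "measure M (D k) \<le> e / 2^(k+2)" for k
  proof -
    have "measure M (D k) \<le> measure M (A k - C k) + measure M (- A k - C' k)"
      unfolding D_def using CM by (intro measure_Un_le sets.Diff) auto
    also have "\<dots> \<le> e / 2^(k+2)"
    proof -
      have "e / 2^(k+3) + e/2^(k+3) = e/2^(k+2)" by (simp add: field_simps power_add)
      thus ?thesis using C(3)[of k] C'(3)[of k] by linarith
    qed
    finally show ?thesis .
  qed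
  have compl: "UNIV - K = (\<Union>k. D k)"
    using C(1) C'(1) unfolding K_def D_def by blast
  have "measure M (\<Union>k. D k) \<le> e / 2"
  proof (rule measure_countable_Union_le)
    show "D i \<in> fmeasurable M" for i using DM by (simp add: fmeasurable_def less_top[symmetric])
    fix n
    have "measure M (\<Union> (D ` {..n})) \<le> (\<Sum>k\<in>{..n}. measure M (D k))"
      using DM by (intro measure_UNION_le) auto
    also have "\<dots> \<le> (\<Sum>k\<in>{..n}. e / 2^(k+2))" by (intro sum_mono Dle)
    also have "\<dots> = (\<Sum>k<Suc n. (e/2) / 2^(k+1))"
      by (intro sum.cong) (auto simp: lessThan_Suc_atMost)
    also have "\<dots> \<le> e/2" unfolding geom_partial using e by simp
    finally show "measure M (\<Union> (D ` {..n})) \<le> e / 2" .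
  qed
  then have mK: "measure M (UNIV - K) < e" using compl e by simp
  have cont: "continuous_on K f"
    unfolding continuous_on_open_invariant
  proof (intro allI impI)
    fix O' :: "'b set" assume "open O'"
    then obtain B' where B': "B' \<subseteq> BB" "\<Union>B' = O'" using BB(2) by (metis topological_basis_def)
    define I where "I = {k. b k \<in> B'}"
    have O'eq: "O' = (\<Union>k\<in>I. b k)" using B' rb unfolding I_def by blast
    have loc: "f -` b k \<inter> K = (- C' k) \<inter> K" for k
      using C(1)[of k] C'(1)[of k] unfolding K_def A_def by blast
    show "\<exists>A. open A \<and> A \<inter> K = f -` O' \<inter> K"
    proof (intro exI conjI)
      show "open (\<Union>k\<in>I. - C' k)" using C'(2) by (intro open_UN) (auto intro: compact_imp_closed)
      show "(\<Union>k\<in>I. - C' k) \<inter> K = f -` O' \<inter> K"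
        unfolding O'eq using loc by blast
    qed
  qed
  show ?thesis using clK cont mK by blast
qed

lemma lusin_image:
  fixes M :: "'a::polish_space measure" and f :: "'a \<Rightarrow> 'b::{second_countable_topology, t2_space}"
  assumes sM: "sets M = sets borel" and fin: "finite_measure M"
    and f: "f \<in> borel_measurable borel" and D: "D \<in> sets borel" and D0: "measure M (UNIV - D) = 0"
  shows "\<exists>B\<in>sets borel. B \<subseteq> f ` D \<and> measure M (UNIV - f -` B) = 0"
proof -
  interpret finite_measure M by fact
  have "\<forall>m::nat. \<exists>K. K \<subseteq> D \<and> compact K \<and> continuous_on K f \<and> measure M (UNIV - K) < 1/(real m + 1)"
  proof
    fix m :: nat
    obtain K1 where K1: "closed K1" "continuous_on K1 f" "measure M (UNIV - K1) < 1/(2*(real m + 1))"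
      using lusin[OF sM fin f, of "1/(2*(real m + 1))"] by auto
    obtain K2 where K2: "K2 \<subseteq> D" "compact K2" "measure M (D - K2) < 1/(2*(real m + 1))"
      using inner_approx[OF sM fin D, of "1/(2*(real m + 1))"] by auto
    have sets: "K1 \<in> sets M" "K2 \<in> sets M" "D \<in> sets M"
      using K1(1) K2(2) D sM by (auto intro: borel_closed borel_compact)
    have "UNIV - (K1 \<inter> K2) \<subseteq> (UNIV - K1) \<union> (D - K2) \<union> (UNIV - D)" by blast
    then have "measure M (UNIV - (K1 \<inter> K2)) \<le> measure M ((UNIV - K1) \<union> (D - K2) \<union> (UNIV - D))"
      using sets sets.top sM by (intro finite_measure_mono) auto
    also have "\<dots> \<le> measure M ((UNIV - K1) \<union> (D - K2)) + measure M (UNIV - D)"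
      using sets sets.top sM by (intro measure_Un_le) auto
    also have "\<dots> \<le> measure M (UNIV - K1) + measure M (D - K2) + measure M (UNIV - D)"
      using sets sets.top sM by (intro add_right_mono measure_Un_le) auto
    also have "\<dots> < 1/(real m + 1)" using K1(3) K2(3) D0 by (simp add: field_simps)
    finally have bnd: "measure M (UNIV - (K1 \<inter> K2)) < 1/(real m + 1)" .
    show "\<exists>K. K \<subseteq> D \<and> compact K \<and> continuous_on K f \<and> measure M (UNIV - K) < 1/(real m + 1)"
      using K1 K2 bnd by (intro exI[of _ "K1 \<inter> K2"]) (auto intro: compact_Int_closed continuous_on_subset)
  qed
  then obtain K where K: "\<And>m. K m \<subseteq> D" "\<And>m. compact (K m)" "\<And>m. continuous_on (K m) f"
    "\<And>m::nat. measure M (UNIV - K m) < 1/(real m + 1)" by metis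
  define B where "B = (\<Union>m. f ` K m)"
  have Bb: "B \<in> sets borel" unfolding B_def
    using K(2,3) by (intro sets.countable_UN' borel_compact compact_continuous_image) (auto simp: compact_continuous_image borel_compact)
  have fB: "f -` B \<in> sets M"
    using measurable_sets[OF f Bb] sM by simp
  have "measure M (UNIV - f -` B) \<le> 0"
  proof (rule field_le_epsilon)
    fix d :: real assume "d > 0"
    then obtain m :: nat where m: "1/(real m + 1) < d"
      using reals_Archimedean[of d] by (metis add.commute inverse_eq_divide of_nat_Suc)
    have "UNIV - f -` B \<subseteq> UNIV - K m" unfolding B_def by auto
    then have "measure M (UNIV - f -` B) \<le> measure M (UNIV - K m)"
      using fB K(2) sM sets.top by (intro finite_measure_mono) (auto intro!: sets.Diff simp: borel_compact)
    also have "\<dots> < d" using K(4)[of m] m by simp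
    finally show "measure M (UNIV - f -` B) \<le> 0 + d" by simp
  qed
  then have "measure M (UNIV - f -` B) = 0" using measure_nonneg antisym by blast
  moreover have "B \<subseteq> f ` D" unfolding B_def using K(1) by blast
  ultimately show ?thesis using Bb by blast
qed



lemma neq_sets: assumes [measurable]: "f \<in> borel_measurable M" "(g::_\<Rightarrow>real) \<in> borel_measurable M"
  shows "{x \<in> space M. f x \<noteq> g x} \<in> sets M"
  by measurable

lemma eq_sets: assumes [measurable]: "f \<in> borel_measurable M" "(g::_\<Rightarrow>real) \<in> borel_measurable M"
  shows "{x \<in> space M. f x = g x} \<in> sets M"
  by measurable

lemma G1:
  assumes Q: "prob_space Q" and X: "X \<in> Q \<rightarrow>\<^sub>M MM" and g: "g \<in> borel_measurable MM"
    and Y: "Y \<in> borel_measurable Q" and ae: "AE \<omega> in Q. Y \<omega> = g (X \<omega>)"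
  shows "cond_law_version Q X MM Y (\<lambda>x. return borel (g x))"
  unfolding cond_law_version_def
proof (intro conjI ballI)
  show "(\<lambda>x. return borel (g x)) \<in> MM \<rightarrow>\<^sub>M prob_algebra borel"
    by (intro measurable_prob_algebraI prob_space_return measurable_compose[OF g return_measurable]) auto
  fix A B assume A: "A \<in> sets (borel :: real measure)" and B: "B \<in> sets MM"
  have s1: "{\<omega> \<in> space Q. Y \<omega> \<in> A \<and> X \<omega> \<in> B} \<in> sets Q"
    using Y X A B by measurable
  have s2: "{\<omega> \<in> space Q. g (X \<omega>) \<in> A \<and> X \<omega> \<in> B} \<in> sets Q"
    using g X A B by measurable
  have "emeasure Q {\<omega> \<in> space Q. Y \<omega> \<in> A \<and> X \<omega> \<in> B} = emeasure Q {\<omega> \<in> space Q. g (X \<omega>) \<in> A \<and> X \<omega> \<in> B}"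
    by (rule emeasure_eq_AE[OF _ s1 s2]) (use ae in \<open>auto elim!: eventually_mono\<close>)
  also have "\<dots> = (\<integral>\<^sup>+ \<omega>. indicator {\<omega> \<in> space Q. g (X \<omega>) \<in> A \<and> X \<omega> \<in> B} \<omega> \<partial>Q)"
    using s2 by simp
  also have "\<dots> = (\<integral>\<^sup>+ \<omega>. indicator B (X \<omega>) * indicator A (g (X \<omega>)) \<partial>Q)"
    by (intro nn_integral_cong) (auto simp: indicator_def)
  also have "\<dots> = (\<integral>\<^sup>+ z. indicator B z * indicator A (g z) \<partial>(distr Q MM X))"
    using X g A B by (subst nn_integral_distr) (auto intro!: borel_measurable_times_ennreal borel_measurable_indicator' simp: measurable_compose)
  also have "\<dots> = (\<integral>\<^sup>+ z. indicator B z * emeasure (return borel (g z)) A \<partial>(distr Q MM X))"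
    using A by (intro nn_integral_cong) simp
  finally show "emeasure Q {\<omega> \<in> space Q. Y \<omega> \<in> A \<and> X \<omega> \<in> B} = (\<integral>\<^sup>+ z. indicator B z * emeasure (return borel (g z)) A \<partial>(distr Q MM X))" .
qed

lemma cond_law_eq_sets:
  assumes "cond_law_version Q X MM Y K" "cond_law_version Q X MM Y' K'"
    and "AE x in distr Q MM X. K x = K' x"
    and A: "A \<in> sets borel" and B: "B \<in> sets MM"
  shows "emeasure Q {\<omega> \<in> space Q. Y' \<omega> \<in> A \<and> X \<omega> \<in> B} = emeasure Q {\<omega> \<in> space Q. Y \<omega> \<in> A \<and> X \<omega> \<in> B}"
proof -
  have "emeasure Q {\<omega> \<in> space Q. Y' \<omega> \<in> A \<and> X \<omega> \<in> B} = (\<integral>\<^sup>+ z. indicator B z * emeasure (K' z) A \<partial>(distr Q MM X))"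
    using assms(2)[unfolded cond_law_version_def, THEN conjunct2, rule_format, OF A B] .
  also have "\<dots> = (\<integral>\<^sup>+ z. indicator B z * emeasure (K z) A \<partial>(distr Q MM X))"
    using assms(3) by (intro nn_integral_cong_AE) (auto elim!: eventually_mono)
  also have "\<dots> = emeasure Q {\<omega> \<in> space Q. Y \<omega> \<in> A \<and> X \<omega> \<in> B}"
    using assms(1)[unfolded cond_law_version_def, THEN conjunct2, rule_format, OF A B] by simp
  finally show ?thesis .
qed

lemma G2:
  assumes Q: "prob_space Q" and X: "X \<in> Q \<rightarrow>\<^sub>M MM" and g: "g \<in> borel_measurable MM"
    and Y: "Y \<in> borel_measurable Q" and Y': "Y' \<in> borel_measurable Q"
    and K: "cond_law_version Q X MM Y K" and K': "cond_law_version Q X MM Y' K'"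
    and KK: "AE x in distr Q MM X. K x = K' x"
    and ae: "AE \<omega> in Q. Y \<omega> = g (X \<omega>)"
  shows "AE \<omega> in Q. Y' \<omega> = g (X \<omega>)"
proof -
  have key: "emeasure Q {\<omega> \<in> space Q. Y' \<omega> \<in> A \<and> X \<omega> \<in> B} = emeasure Q {\<omega> \<in> space Q. g (X \<omega>) \<in> A \<and> X \<omega> \<in> B}"
    if A: "A \<in> sets borel" and B: "B \<in> sets MM" for A B
  proof -
    have s1: "{\<omega> \<in> space Q. Y \<omega> \<in> A \<and> X \<omega> \<in> B} \<in> sets Q"
      using Y X A B by measurable
    have s2: "{\<omega> \<in> space Q. g (X \<omega>) \<in> A \<and> X \<omega> \<in> B} \<in> sets Q"
      using g X A B by measurable
    have "emeasure Q {\<omega> \<in> space Q. Y' \<omega> \<in> A \<and> X \<omega> \<in> B} = emeasure Q {\<omega> \<in> space Q. Y \<omega> \<in> A \<and> X \<omega> \<in> B}"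
      by (rule cond_law_eq_sets[OF K K' KK A B])
    also have "\<dots> = emeasure Q {\<omega> \<in> space Q. g (X \<omega>) \<in> A \<and> X \<omega> \<in> B}"
      by (rule emeasure_eq_AE[OF _ s1 s2]) (use ae in \<open>auto elim!: eventually_mono\<close>)
    finally show ?thesis .
  qed
  have ae1: "AE \<omega> in Q. \<not> (Y' \<omega> < q \<and> q \<le> g (X \<omega>))" for q
  proof -
    have B: "{x \<in> space MM. q \<le> g x} \<in> sets MM" using g by measurable
    have "emeasure Q {\<omega> \<in> space Q. Y' \<omega> \<in> {..<q} \<and> X \<omega> \<in> {x \<in> space MM. q \<le> g x}}
        = emeasure Q {\<omega> \<in> space Q. g (X \<omega>) \<in> {..<q} \<and> X \<omega> \<in> {x \<in> space MM. q \<le> g x}}"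
      by (rule key) (auto simp: B)
    also have "\<dots> = emeasure Q {}" by (intro arg_cong[where f="emeasure Q"]) auto
    also have "\<dots> = 0" by simp
    finally have z: "emeasure Q {\<omega> \<in> space Q. Y' \<omega> \<in> {..<q} \<and> X \<omega> \<in> {x \<in> space MM. q \<le> g x}} = 0" .
    have S: "{\<omega> \<in> space Q. Y' \<omega> \<in> {..<q} \<and> X \<omega> \<in> {x \<in> space MM. q \<le> g x}} \<in> sets Q"
      using Y' X B by measurable
    show ?thesis
      by (subst AE_iff_measurable[OF S]) (use X z in \<open>auto simp: measurable_space\<close>)
  qed
  have ae2: "AE \<omega> in Q. \<not> (q \<le> Y' \<omega> \<and> g (X \<omega>) < q)" for q
  proof -
    have B: "{x \<in> space MM. g x < q} \<in> sets MM" using g by measurable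
    have "emeasure Q {\<omega> \<in> space Q. Y' \<omega> \<in> {q..} \<and> X \<omega> \<in> {x \<in> space MM. g x < q}}
        = emeasure Q {\<omega> \<in> space Q. g (X \<omega>) \<in> {q..} \<and> X \<omega> \<in> {x \<in> space MM. g x < q}}"
      by (rule key) (auto simp: B)
    also have "\<dots> = emeasure Q {}" by (intro arg_cong[where f="emeasure Q"]) auto
    also have "\<dots> = 0" by simp
    finally have z: "emeasure Q {\<omega> \<in> space Q. Y' \<omega> \<in> {q..} \<and> X \<omega> \<in> {x \<in> space MM. g x < q}} = 0" .
    have S: "{\<omega> \<in> space Q. Y' \<omega> \<in> {q..} \<and> X \<omega> \<in> {x \<in> space MM. g x < q}} \<in> sets Q"
      using Y' X B by measurable
    show ?thesis
      by (subst AE_iff_measurable[OF S]) (use X z in \<open>auto simp: measurable_space\<close>)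
  qed
  have "AE \<omega> in Q. \<forall>q\<in>\<rat>. \<not> (Y' \<omega> < q \<and> q \<le> g (X \<omega>)) \<and> \<not> (q \<le> Y' \<omega> \<and> g (X \<omega>) < q)"
    using ae1 ae2 by (subst AE_ball_countable) (auto simp: countable_rat)
  then show ?thesis
  proof (rule eventually_mono)
    fix \<omega> assume H: "\<forall>q\<in>\<rat>. \<not> (Y' \<omega> < q \<and> q \<le> g (X \<omega>)) \<and> \<not> (q \<le> Y' \<omega> \<and> g (X \<omega>) < q)"
    show "Y' \<omega> = g (X \<omega>)"
    proof (rule ccontr)
      assume "Y' \<omega> \<noteq> g (X \<omega>)"
      then consider "Y' \<omega> < g (X \<omega>)" | "g (X \<omega>) < Y' \<omega>" by linarith
      then show False
      proof cases
        case 1 then obtain q where "q \<in> \<rat>" "Y' \<omega> < q" "q < g (X \<omega>)" using Rats_dense_in_real by blast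
        thus False using H by force
      next
        case 2 then obtain q where "q \<in> \<rat>" "g (X \<omega>) < q" "q < Y' \<omega>" using Rats_dense_in_real by blast
        thus False using H by force
      qed
    qed
  qed
qed

lemma incl_meas: "(\<lambda>u. u) \<in> PiM J (\<lambda>_. borel) \<rightarrow>\<^sub>M PiM UNIV (\<lambda>_. (borel :: real measure))"
proof (rule measurable_PiM_single')
  fix j :: 'a
  show "(\<lambda>u. u j) \<in> borel_measurable (PiM J (\<lambda>_. borel))"
  proof (cases "j \<in> J")
    case True thus ?thesis by measurable
  next
    case False
    show ?thesis
      by (rule measurable_cong[THEN iffD2, of _ _ "\<lambda>_. undefined"]) (use False in \<open>auto simp: space_PiM PiE_def extensional_def\<close>)
  qed
qed (auto simp: space_PiM)

locale p5 =
  fixes P :: "'w measure"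
    and Usp :: "'j::finite \<Rightarrow> real set"
    and U :: "'w \<Rightarrow> 'j \<Rightarrow> real"
    and Endo :: "'n::finite option \<Rightarrow> 'n option set"
    and Exo :: "'n option \<Rightarrow> 'j set"
    and G :: "'n option \<Rightarrow> ('n option \<Rightarrow> real) \<Rightarrow> ('j \<Rightarrow> real) \<Rightarrow> real"
    and V :: "'w \<Rightarrow> 'n option \<Rightarrow> real"
    and Vdo :: "real \<Rightarrow> 'w \<Rightarrow> 'n option \<Rightarrow> real"
    and Ss :: "real set"
    and h :: "('n \<Rightarrow> real) \<Rightarrow> real \<Rightarrow> real"
  assumes scm: "is_SCM P Usp U Endo Exo G"
    and A: "assumption_A Endo Exo"
    and sol: "is_solution P U G V"
    and sol_do: "\<forall>s\<in>Ss. is_solution P U (do_S G s) (Vdo s)"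
    and Ss_fin: "finite Ss"
    and S_in: "\<forall>\<omega>\<in>space P. Sof V \<omega> \<in> Ss"
    and S_pos: "\<forall>s\<in>Ss. measure P {\<omega> \<in> space P. Sof V \<omega> = s} > 0"
    and h_meas: "(\<lambda>(x, s). h x s) \<in> borel_measurable (MX \<Otimes>\<^sub>M borel)"
begin

lemma ps: "prob_space P" using scm unfolding is_SCM_def by blast

sublocale prob_space P by (rule ps)

lemma V_meas: "V \<in> P \<rightarrow>\<^sub>M PiM UNIV (\<lambda>_. borel)" using sol unfolding is_solution_def by blast
lemma Vdo_meas: "s \<in> Ss \<Longrightarrow> Vdo s \<in> P \<rightarrow>\<^sub>M PiM UNIV (\<lambda>_. borel)" using sol_do unfolding is_solution_def by blast

lemma Xof_meas: "W \<in> P \<rightarrow>\<^sub>M PiM UNIV (\<lambda>_. borel) \<Longrightarrow> Xof W \<in> P \<rightarrow>\<^sub>M MX"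
  unfolding MX_def Xof_def by (rule measurable_PiM_single') (auto intro: measurable_compose[OF _ measurable_component_singleton] simp: space_PiM)

lemma Sof_meas: "Sof V \<in> borel_measurable P"
  unfolding Sof_def using V_meas by (rule measurable_compose[OF _ measurable_component_singleton]) auto

lemma U_meas: "U \<in> P \<rightarrow>\<^sub>M PiM UNIV (\<lambda>_. borel)" using scm unfolding is_SCM_def by blast

lemma h_comp: "f \<in> N \<rightarrow>\<^sub>M MX \<Longrightarrow> g \<in> borel_measurable N \<Longrightarrow> (\<lambda>x. h (f x) (g x)) \<in> borel_measurable N"
  using measurable_compose[OF measurable_Pair h_meas] by simp

definition Aset where "Aset s = {\<omega> \<in> space P. Sof V \<omega> = s}"
lemma Aset_sets: "Aset s \<in> sets P" unfolding Aset_def using Sof_meas by measurable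

abbreviation Q where "Q s \<equiv> cond_S P V s"

lemma Q_ps: "s \<in> Ss \<Longrightarrow> prob_space (Q s)"
  unfolding cond_S_def using S_pos Aset_sets unfolding Aset_def
  by (intro prob_space_uniform_measure) (auto simp: emeasure_eq_measure)

lemma sets_Q[simp, measurable_cong]: "sets (Q s) = sets P" unfolding cond_S_def by simp
lemma space_Q[simp]: "space (Q s) = space P" unfolding cond_S_def by simp

lemma meas_Q: "f \<in> P \<rightarrow>\<^sub>M N \<Longrightarrow> f \<in> Q s \<rightarrow>\<^sub>M N"
  by (simp add: measurable_cong_sets[OF sets_Q refl])

lemma AE_Q: "s \<in> Ss \<Longrightarrow> (AE \<omega> in Q s. R \<omega>) \<longleftrightarrow> (AE \<omega> in P. Sof V \<omega> = s \<longrightarrow> R \<omega>)"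
proof -
  assume s: "s \<in> Ss"
  have "(AE \<omega> in Q s. R \<omega>) \<longleftrightarrow> (AE \<omega> in P. \<omega> \<in> Aset s \<longrightarrow> R \<omega>)"
    unfolding cond_S_def Aset_def[symmetric] using S_pos s Aset_sets
    by (intro AE_uniform_measure) (auto simp: emeasure_eq_measure Aset_def)
  also have "\<dots> \<longleftrightarrow> (AE \<omega> in P. Sof V \<omega> = s \<longrightarrow> R \<omega>)"
    by (intro AE_cong) (auto simp: Aset_def)
  finally show ?thesis .
qed


definition R where "R = {(k,l). k \<in> Endo l}"

lemma R_trancl: "(k,l) \<in> R\<^sup>+ \<Longrightarrow> (Inl k, Inl l) \<in> (scm_graph Endo Exo)\<^sup>+"
proof (induction rule: trancl_induct)
  case (base y) thus ?case by (auto simp: R_def scm_graph_def)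
next
  case (step y z)
  hence "(Inl y, Inl z) \<in> scm_graph Endo Exo" by (auto simp: R_def scm_graph_def)
  thus ?case using step by (meson trancl.trancl_into_trancl)
qed

lemma R_irr: "(l,l) \<notin> R\<^sup>+"
  using R_trancl A unfolding assumption_A_def acyclic_def by blast

lemma wfR: "wf R"
  by (rule finite_acyclic_wf) (auto simp: acyclic_def R_irr)

lemma dop: "depends_on_parents Endo Exo G" using scm unfolding is_SCM_def by blast

lemma dop_do: "depends_on_parents Endo Exo (do_S G t)"
  using dop unfolding depends_on_parents_def do_S_def do_intervention_def by auto

lemma do_S_simps[simp]: "do_S G t None v u = t" "do_S G t (Some i) v u = G (Some i) v u"
  unfolding do_S_def do_intervention_def by auto

lemma eqV: "AE \<omega> in P. V \<omega> l = G l (V \<omega>) (U \<omega>)" using sol unfolding is_solution_def by blast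
lemma eqVdo: "t \<in> Ss \<Longrightarrow> AE \<omega> in P. Vdo t \<omega> l = do_S G t l (Vdo t \<omega>) (U \<omega>)"
  using sol_do unfolding is_solution_def by blast

lemma LA_node:
  assumes t: "t \<in> Ss"
  shows "AE \<omega> in P. Sof V \<omega> = t \<longrightarrow> Vdo t \<omega> l = V \<omega> l"
  using wfR
proof (induction l rule: wf_induct_rule)
  case (less l)
  have IH: "AE \<omega> in P. \<forall>k\<in>Endo l. Sof V \<omega> = t \<longrightarrow> Vdo t \<omega> k = V \<omega> k"
    by (intro AE_finite_allI) (auto intro: less simp: R_def)
  show ?case
    using IH eqV[of l] eqVdo[OF t, of l]
  proof eventually_elim
    case (elim \<omega>)
    show ?case
    proof
      assume S: "Sof V \<omega> = t"
      show "Vdo t \<omega> l = V \<omega> l"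
      proof (cases l)
        case None thus ?thesis using elim S by (simp add: Sof_def)
      next
        case (Some i)
        have "G l (Vdo t \<omega>) (U \<omega>) = G l (V \<omega>) (U \<omega>)"
          using dop elim(1) S unfolding depends_on_parents_def by blast
        thus ?thesis using elim Some by simp
      qed
    qed
  qed
qed

lemma LA: "t \<in> Ss \<Longrightarrow> AE \<omega> in P. Sof V \<omega> = t \<longrightarrow> Xof (Vdo t) \<omega> = Xof V \<omega>"
proof -
  assume t: "t \<in> Ss"
  have "AE \<omega> in P. \<forall>l\<in>UNIV. Sof V \<omega> = t \<longrightarrow> Vdo t \<omega> l = V \<omega> l"
    by (intro AE_finite_allI LA_node t) auto
  thus ?thesis by eventually_elim (auto simp: Xof_def)
qed


definition C where "C s s' \<longleftrightarrow> (AE \<omega> in Q s. h (Xof V \<omega>) s = h (Xof (Vdo s') \<omega>) s')"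

lemma XQ: "Xof V \<in> Q s \<rightarrow>\<^sub>M MX" by (intro meas_Q Xof_meas V_meas)
lemma XdQ: "t \<in> Ss \<Longrightarrow> Xof (Vdo t) \<in> Q s \<rightarrow>\<^sub>M MX" by (intro meas_Q Xof_meas Vdo_meas)

lemma P1pair:
  assumes s: "s \<in> Ss" and s': "s' \<in> Ss"
  shows "(AE p in pi_star P V Vdo s s'. h (fst p) s = h (snd p) s') \<longleftrightarrow> C s s'"
proof -
  have m: "(\<lambda>\<omega>. (Xof V \<omega>, Xof (Vdo s') \<omega>)) \<in> Q s \<rightarrow>\<^sub>M MX \<Otimes>\<^sub>M MX"
    using XQ XdQ[OF s'] by (rule measurable_Pair)
  have "(\<lambda>p. h (fst p) s) \<in> borel_measurable (MX \<Otimes>\<^sub>M MX)" "(\<lambda>p. h (snd p) s') \<in> borel_measurable (MX \<Otimes>\<^sub>M MX)"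
    by (auto intro!: h_comp)
  then have S: "{p \<in> space (MX \<Otimes>\<^sub>M MX). h (fst p) s = h (snd p) s'} \<in> sets (MX \<Otimes>\<^sub>M MX)"
    by measurable
  show ?thesis unfolding pi_star_def C_def
    by (subst AE_distr_iff[OF m S]) simp
qed

lemma P1: "cf_fair P V Vdo Ss h \<longleftrightarrow> (\<forall>s\<in>Ss. \<forall>s'\<in>Ss. C s s')"
proof
  assume cf: "cf_fair P V Vdo Ss h"
  show "\<forall>s\<in>Ss. \<forall>s'\<in>Ss. C s s'"
  proof (intro ballI)
    fix s s' assume s: "s \<in> Ss" and s': "s' \<in> Ss"
    obtain K K' where K: "cond_law_version (Q s) (Xof V) MX (\<lambda>\<omega>. h (Xof (Vdo s) \<omega>) s) K"
      and K': "cond_law_version (Q s) (Xof V) MX (\<lambda>\<omega>. h (Xof (Vdo s') \<omega>) s') K'"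
      and KK: "AE x in mu P V s. K x = K' x"
      using cf s s' unfolding cf_fair_def by blast
    have ae: "AE \<omega> in Q s. h (Xof (Vdo s) \<omega>) s = h (Xof V \<omega>) s"
      using LA[OF s] by (subst AE_Q[OF s]) (auto elim!: eventually_mono)
    have "AE \<omega> in Q s. h (Xof (Vdo s') \<omega>) s' = h (Xof V \<omega>) s"
      by (rule G2[where g="\<lambda>x. h x s", OF Q_ps[OF s] XQ _ _ _ K K' KK[unfolded mu_def] ae])
        (auto intro!: h_comp XQ XdQ s s')
    thus "C s s'" unfolding C_def by (auto elim!: eventually_mono)
  qed
next
  assume H: "\<forall>s\<in>Ss. \<forall>s'\<in>Ss. C s s'"
  show "cf_fair P V Vdo Ss h" unfolding cf_fair_def
  proof (intro ballI exI conjI)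
    fix s s' assume s: "s \<in> Ss" and s': "s' \<in> Ss"
    have ae: "AE \<omega> in Q s. h (Xof (Vdo s) \<omega>) s = h (Xof V \<omega>) s"
      using LA[OF s] by (subst AE_Q[OF s]) (auto elim!: eventually_mono)
    show "cond_law_version (Q s) (Xof V) MX (\<lambda>\<omega>. h (Xof (Vdo s) \<omega>) s) (\<lambda>x. return borel (h x s))"
      by (rule G1[where g="\<lambda>x. h x s", OF Q_ps[OF s] XQ _ _ ae]) (auto intro!: h_comp XdQ s)
    have "C s s'" using H s s' by blast
    then have ae': "AE \<omega> in Q s. h (Xof (Vdo s') \<omega>) s' = h (Xof V \<omega>) s"
      unfolding C_def by (rule eventually_mono) auto
    show "cond_law_version (Q s) (Xof V) MX (\<lambda>\<omega>. h (Xof (Vdo s') \<omega>) s') (\<lambda>x. return borel (h x s))"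
      by (rule G1[where g="\<lambda>x. h x s", OF Q_ps[OF s] XQ _ _ ae']) (auto intro!: h_comp XdQ s')
  qed simp
qed


definition stp :: "real \<Rightarrow> ('j \<Rightarrow> real) \<Rightarrow> ('n option \<Rightarrow> real) \<Rightarrow> ('n option \<Rightarrow> real)" where
  "stp t u v = (\<lambda>l. do_S G t l v u)"

definition Phi :: "real \<Rightarrow> ('j \<Rightarrow> real) \<Rightarrow> ('n option \<Rightarrow> real)" where
  "Phi t u = (stp t u ^^ CARD('n option)) (\<lambda>_. 0)"

definition anc where "anc l = {k. (k,l) \<in> R\<^sup>+}"

lemma anc_sub: "k \<in> Endo l \<Longrightarrow> anc k \<subset> anc l"
proof -
  assume k: "k \<in> Endo l"
  hence kl: "(k,l) \<in> R" by (simp add: R_def)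
  have "anc k \<subseteq> anc l" unfolding anc_def using kl by (auto intro: trancl_into_trancl)
  moreover have "k \<in> anc l" "k \<notin> anc k" unfolding anc_def using kl R_irr by auto
  ultimately show ?thesis by blast
qed

lemma anc_card: "card (anc l) < CARD('n option)"
proof -
  have "anc l \<subseteq> UNIV - {l}" unfolding anc_def using R_irr by auto
  hence "card (anc l) \<le> card (UNIV - {l} :: 'n option set)" by (intro card_mono) auto
  also have "\<dots> < CARD('n option)" by (simp add: card_Diff_singleton)
  finally show ?thesis .
qed

lemma Phi_iter:
  assumes t: "t \<in> Ss"
  shows "card (anc l) < n \<Longrightarrow> AE \<omega> in P. Vdo t \<omega> l = (stp t (U \<omega>) ^^ n) (\<lambda>_. 0) l"
  using wfR
proof (induction l arbitrary: n rule: wf_induct_rule)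
  case (less l)
  then obtain m where n: "n = Suc m" and m: "card (anc l) \<le> m" by (cases n) auto
  have "card (anc k) < m" if "k \<in> Endo l" for k
    using psubset_card_mono[OF _ anc_sub[OF that]] m by auto
  hence IH: "AE \<omega> in P. \<forall>k\<in>Endo l. Vdo t \<omega> k = (stp t (U \<omega>) ^^ m) (\<lambda>_. 0) k"
    by (intro AE_finite_allI) (auto intro: less simp: R_def)
  show ?case
    using IH eqVdo[OF t, of l]
  proof eventually_elim
    case (elim \<omega>)
    have "(stp t (U \<omega>) ^^ n) (\<lambda>_. 0) l = do_S G t l ((stp t (U \<omega>) ^^ m) (\<lambda>_. 0)) (U \<omega>)"
      by (simp add: n stp_def)
    also have "\<dots> = do_S G t l (Vdo t \<omega>) (U \<omega>)"
      using dop_do[of t] elim(1) unfolding depends_on_parents_def by metis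
    finally show ?case using elim(2) by simp
  qed
qed

lemma PhiAE: "t \<in> Ss \<Longrightarrow> AE \<omega> in P. Vdo t \<omega> = Phi t (U \<omega>)"
proof -
  assume t: "t \<in> Ss"
  have "AE \<omega> in P. \<forall>l\<in>UNIV. Vdo t \<omega> l = Phi t (U \<omega>) l"
    unfolding Phi_def by (intro AE_finite_allI Phi_iter[OF t] anc_card) auto
  thus ?thesis by eventually_elim auto
qed

lemma iter_JX:
  assumes "\<forall>j\<in>JX Exo. u j = u' j"
  shows "(stp t u ^^ n) v0 = (stp t u' ^^ n) v0"
proof (induction n)
  case (Suc n)
  show ?case
  proof
    fix l
    show "(stp t u ^^ Suc n) v0 l = (stp t u' ^^ Suc n) v0 l"
    proof (cases l)
      case (Some i)
      have ex: "\<forall>j\<in>Exo (Some i). u j = u' j" using assms unfolding JX_def by auto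
      have Sx: "\<And>x w. stp t x w l = G (Some i) w x" using Some by (simp add: stp_def)
      have "(stp t u ^^ Suc n) v0 l = stp t u ((stp t u ^^ n) v0) l" by simp
      also have "\<dots> = G (Some i) ((stp t u' ^^ n) v0) u" unfolding Sx Suc.IH ..
      also have "\<dots> = G (Some i) ((stp t u' ^^ n) v0) u'"
        using dop ex unfolding depends_on_parents_def by blast
      also have "\<dots> = (stp t u' ^^ Suc n) v0 l" by (simp only: funpow.simps comp_apply Sx)
      finally show ?thesis .
    qed (simp add: stp_def)
  qed
qed simp

lemma Phi_JX: "\<forall>j\<in>JX Exo. u j = u' j \<Longrightarrow> Phi t u = Phi t u'"
  unfolding Phi_def by (rule iter_JX)

lemma G_meas: "(\<lambda>(v, u). G i v u) \<in> borel_measurable (PiM UNIV (\<lambda>_. borel) \<Otimes>\<^sub>M PiM UNIV (\<lambda>_. borel))"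
  using scm unfolding is_SCM_def by blast

lemma G_comp: "f \<in> N \<rightarrow>\<^sub>M PiM UNIV (\<lambda>_. borel) \<Longrightarrow> g \<in> N \<rightarrow>\<^sub>M PiM UNIV (\<lambda>_. borel) \<Longrightarrow> (\<lambda>x. G i (f x) (g x)) \<in> borel_measurable N"
  using measurable_compose[OF measurable_Pair G_meas] by simp

lemma iter_meas: "(\<lambda>u. (stp t u ^^ n) (\<lambda>_. 0)) \<in> PiM UNIV (\<lambda>_. borel) \<rightarrow>\<^sub>M PiM UNIV (\<lambda>_. borel)"
proof (induction n)
  case 0 show ?case by (auto intro!: measurable_const simp: space_PiM)
next
  case (Suc n)
  show ?case
  proof (rule measurable_PiM_single')
    fix l :: "'n option"
    show "(\<lambda>u. (stp t u ^^ Suc n) (\<lambda>_. 0) l) \<in> borel_measurable (PiM UNIV (\<lambda>_. borel))"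
    proof (cases l)
      case None thus ?thesis by (simp add: stp_def)
    next
      case (Some i)
      show ?thesis using Some by (simp add: stp_def) (rule G_comp[OF Suc measurable_ident_sets]; simp)
    qed
  qed (simp add: space_PiM)
qed

lemma Phi_meas: "Phi t \<in> PiM UNIV (\<lambda>_. borel) \<rightarrow>\<^sub>M PiM UNIV (\<lambda>_. borel)"
  unfolding Phi_def[abs_def] by (rule iter_meas)


lemma UX_meas: "UX Exo U \<in> P \<rightarrow>\<^sub>M PiM (JX Exo) (\<lambda>_. borel)"
  unfolding UX_def using U_meas
  by (intro measurable_restrict) (auto intro: measurable_compose[OF _ measurable_component_singleton])

lemma US_meas: "US Exo U \<in> P \<rightarrow>\<^sub>M PiM (Exo None) (\<lambda>_. borel)"
  unfolding US_def using U_meas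
  by (intro measurable_restrict) (auto intro: measurable_compose[OF _ measurable_component_singleton])

lemma UX_space: "\<omega> \<in> space P \<Longrightarrow> UX Exo U \<omega> \<in> space (PiM (JX Exo) (\<lambda>_. borel))"
  using measurable_space[OF UX_meas] .
lemma US_space: "\<omega> \<in> space P \<Longrightarrow> US Exo U \<omega> \<in> space (PiM (Exo None) (\<lambda>_. borel))"
  using measurable_space[OF US_meas] .

definition Xs where "Xs t u = (\<lambda>i. Phi t u (Some i))"

lemma Xs_meas: "Xs t \<in> PiM J (\<lambda>_. borel) \<rightarrow>\<^sub>M MX"
proof -
  have "(\<lambda>u. Phi t u) \<in> PiM J (\<lambda>_. borel) \<rightarrow>\<^sub>M PiM UNIV (\<lambda>_. borel)"
    by (rule measurable_compose[OF incl_meas Phi_meas])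
  thus ?thesis unfolding Xs_def[abs_def] MX_def
    by (intro measurable_PiM_single') (auto intro: measurable_compose[OF _ measurable_component_singleton] simp: space_PiM)
qed

lemma XsAE: "t \<in> Ss \<Longrightarrow> AE \<omega> in P. Xof (Vdo t) \<omega> = Xs t (UX Exo U \<omega>)"
proof -
  assume t: "t \<in> Ss"
  show ?thesis using PhiAE[OF t]
  proof eventually_elim
    case (elim \<omega>)
    have "Phi t (U \<omega>) = Phi t (UX Exo U \<omega>)" by (rule Phi_JX) (simp add: UX_def)
    thus ?case using elim by (simp add: Xof_def Xs_def)
  qed
qed

definition psi where "psi u = G None (\<lambda>_. 0) u"

lemma psi_meas: "psi \<in> borel_measurable (PiM (Exo None) (\<lambda>_. borel))"
  unfolding psi_def[abs_def]
  by (rule G_comp[OF measurable_const incl_meas]) (simp add: space_PiM)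

lemma Endo_None: "assumption_RE P U Endo Exo \<Longrightarrow> Endo None = {}"
proof -
  assume RE: "assumption_RE P U Endo Exo"
  have "None \<notin> Endo None" using R_irr[of None] by (auto simp: R_def)
  moreover have "Some i \<notin> Endo None" for i using RE unfolding assumption_RE_def by blast
  ultimately show ?thesis by (metis equals0I not_None_eq)
qed

lemma psiAE: "assumption_RE P U Endo Exo \<Longrightarrow> AE \<omega> in P. Sof V \<omega> = psi (US Exo U \<omega>)"
proof -
  assume RE: "assumption_RE P U Endo Exo"
  show ?thesis using eqV[of None]
  proof eventually_elim
    case (elim \<omega>)
    have "G None (V \<omega>) (U \<omega>) = G None (\<lambda>_. 0) (US Exo U \<omega>)"
      using dop Endo_None[OF RE] unfolding depends_on_parents_def by (simp add: US_def)
    thus ?case using elim by (simp add: Sof_def psi_def)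
  qed
qed

lemma C_iff_null:
  assumes t: "t \<in> Ss" and t': "t' \<in> Ss"
  shows "C t t' \<longleftrightarrow> measure P ({\<omega> \<in> space P. h (Xof (Vdo t) \<omega>) t \<noteq> h (Xof (Vdo t') \<omega>) t'} \<inter> Aset t) = 0"
proof -
  define N where "N = {\<omega> \<in> space P. h (Xof (Vdo t) \<omega>) t \<noteq> h (Xof (Vdo t') \<omega>) t'} \<inter> Aset t"
  have m1: "(\<lambda>\<omega>. h (Xof (Vdo t) \<omega>) t) \<in> borel_measurable P" "(\<lambda>\<omega>. h (Xof (Vdo t') \<omega>) t') \<in> borel_measurable P"
    by (auto intro!: h_comp Xof_meas Vdo_meas t t')
  have NS: "N \<in> sets P" unfolding N_def using m1 Aset_sets by measurable
  have "C t t' \<longleftrightarrow> (AE \<omega> in P. Sof V \<omega> = t \<longrightarrow> h (Xof V \<omega>) t = h (Xof (Vdo t') \<omega>) t')"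
    unfolding C_def by (rule AE_Q[OF t])
  also have "\<dots> \<longleftrightarrow> (AE \<omega> in P. \<omega> \<notin> N)"
  proof
    assume H: "AE \<omega> in P. Sof V \<omega> = t \<longrightarrow> h (Xof V \<omega>) t = h (Xof (Vdo t') \<omega>) t'"
    show "AE \<omega> in P. \<omega> \<notin> N" using H LA[OF t] by eventually_elim (auto simp: N_def Aset_def)
  next
    assume H: "AE \<omega> in P. \<omega> \<notin> N"
    show "AE \<omega> in P. Sof V \<omega> = t \<longrightarrow> h (Xof V \<omega>) t = h (Xof (Vdo t') \<omega>) t'"
      using H LA[OF t] AE_space by eventually_elim (auto simp: N_def Aset_def)
  qed
  also have "\<dots> \<longleftrightarrow> emeasure P N = 0"
    by (rule AE_iff_measurable[OF NS]) (use NS sets.sets_into_space in auto)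
  also have "\<dots> \<longleftrightarrow> measure P N = 0" by (simp add: emeasure_eq_measure)
  finally show ?thesis unfolding N_def .
qed

lemma indep_E:
  assumes RE: "assumption_RE P U Endo Exo" and s: "s \<in> Ss" and s': "s' \<in> Ss" and t: "t \<in> Ss"
  shows "measure P ({\<omega> \<in> space P. h (Xof (Vdo s) \<omega>) s \<noteq> h (Xof (Vdo s') \<omega>) s'} \<inter> Aset t)
       = measure P (Aset t) * measure P {\<omega> \<in> space P. h (Xof (Vdo s) \<omega>) s \<noteq> h (Xof (Vdo s') \<omega>) s'}"
proof -
  define E where "E = {\<omega> \<in> space P. h (Xof (Vdo s) \<omega>) s \<noteq> h (Xof (Vdo s') \<omega>) s'}"
  define D where "D = {u \<in> space (PiM (JX Exo) (\<lambda>_. borel)). h (Xs s u) s \<noteq> h (Xs s' u) s'}"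
  define Ct where "Ct = {u \<in> space (PiM (Exo None) (\<lambda>_. borel)). psi u = t}"
  have m1: "(\<lambda>\<omega>. h (Xof (Vdo s) \<omega>) s) \<in> borel_measurable P" "(\<lambda>\<omega>. h (Xof (Vdo s') \<omega>) s') \<in> borel_measurable P"
    by (auto intro!: h_comp Xof_meas Vdo_meas s s')
  have ES: "E \<in> sets P" unfolding E_def using m1 by measurable
  have m2: "(\<lambda>u. h (Xs s u) s) \<in> borel_measurable (PiM (JX Exo) (\<lambda>_. borel))"
     "(\<lambda>u. h (Xs s' u) s') \<in> borel_measurable (PiM (JX Exo) (\<lambda>_. borel))"
    by (auto intro!: h_comp Xs_meas)
  have DS: "D \<in> sets (PiM (JX Exo) (\<lambda>_. borel))"
    unfolding D_def using m2 by (rule neq_sets)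
  have CS: "Ct \<in> sets (PiM (Exo None) (\<lambda>_. borel))"
  proof -
    note psi_meas[measurable]
    show ?thesis unfolding Ct_def by measurable
  qed
  have ind: "prob_space.indep_var P (PiM (Exo None) (\<lambda>_. borel)) (US Exo U) (PiM (JX Exo) (\<lambda>_. borel)) (UX Exo U)"
    using RE unfolding assumption_RE_def by blast
  have I: "measure P ((\<lambda>x. (US Exo U x, UX Exo U x)) -` (Ct \<times> D) \<inter> space P)
      = measure P (US Exo U -` Ct \<inter> space P) * measure P (UX Exo U -` D \<inter> space P)"
    by (rule indep_varD[OF ind CS DS])
  have S1: "US Exo U -` Ct \<inter> space P \<in> sets P" using US_meas CS by (rule measurable_sets)
  have S2: "UX Exo U -` D \<inter> space P \<in> sets P" using UX_meas DS by (rule measurable_sets)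
  have aeE: "AE \<omega> in P. (\<omega> \<in> E) = (\<omega> \<in> UX Exo U -` D \<inter> space P)"
    using XsAE[OF s] XsAE[OF s'] AE_space
    by eventually_elim (auto simp: E_def D_def UX_space)
  have aeA: "AE \<omega> in P. (\<omega> \<in> Aset t) = (\<omega> \<in> US Exo U -` Ct \<inter> space P)"
    using psiAE[OF RE] AE_space
    by eventually_elim (auto simp: Aset_def Ct_def US_space)
  have pre: "(\<lambda>x. (US Exo U x, UX Exo U x)) -` (Ct \<times> D) \<inter> space P = (US Exo U -` Ct \<inter> space P) \<inter> (UX Exo U -` D \<inter> space P)"
    by auto
  have "measure P (E \<inter> Aset t) = measure P ((\<lambda>x. (US Exo U x, UX Exo U x)) -` (Ct \<times> D) \<inter> space P)"
    unfolding pre using aeE aeA ES Aset_sets S1 S2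
    by (intro measure_eq_AE) (auto elim: eventually_mono)
  also have "\<dots> = measure P (Aset t) * measure P E"
  proof -
    have "measure P (US Exo U -` Ct \<inter> space P) = measure P (Aset t)"
      using aeA Aset_sets S1 by (intro measure_eq_AE) (auto elim: eventually_mono)
    moreover have "measure P (UX Exo U -` D \<inter> space P) = measure P E"
      using aeE ES S2 by (intro measure_eq_AE) (auto elim: eventually_mono)
    ultimately show ?thesis unfolding I by simp
  qed
  finally show ?thesis unfolding E_def .
qed


lemma C_diag: "t \<in> Ss \<Longrightarrow> C t t"
  unfolding C_def by (subst AE_Q) (auto elim!: eventually_mono[OF LA])

lemma C_sym:
  assumes RE: "assumption_RE P U Endo Exo" and s: "s \<in> Ss" and s': "s' \<in> Ss" and C: "C s s'"
  shows "C s' s"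
proof -
  define E where "E = {\<omega> \<in> space P. h (Xof (Vdo s) \<omega>) s \<noteq> h (Xof (Vdo s') \<omega>) s'}"
  have E': "{\<omega> \<in> space P. h (Xof (Vdo s') \<omega>) s' \<noteq> h (Xof (Vdo s) \<omega>) s} = E" unfolding E_def by auto
  have z: "measure P (E \<inter> Aset s) = 0" using C C_iff_null[OF s s'] unfolding E_def by simp
  have pos: "measure P (Aset s) > 0" using S_pos s unfolding Aset_def by blast
  have "measure P (Aset s) * measure P E = 0" using z indep_E[OF RE s s' s] unfolding E_def by simp
  hence E0: "measure P E = 0" using pos by simp
  have "measure P (E \<inter> Aset s') = 0" using indep_E[OF RE s s' s'] E0 unfolding E_def by simp
  thus ?thesis using C_iff_null[OF s' s] E' by simp
qed


lemma sets_borel_fun: "sets (borel :: ('a::finite \<Rightarrow> real) measure) = sets (PiM UNIV (\<lambda>_. borel))"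
  by (rule sets_PiM_equal_borel[symmetric])

lemma U_in: "\<omega> \<in> space P \<Longrightarrow> U \<omega> j \<in> Usp j" using scm unfolding is_SCM_def by blast

lemma UXE: "\<omega> \<in> space P \<Longrightarrow> UX Exo U \<omega> \<in> PiE (JX Exo) Usp"
  unfolding UX_def using U_in by auto

lemma EE_sets: "PiE (JX Exo) Usp \<in> sets (borel :: ('j \<Rightarrow> real) measure)"
proof -
  define W where "W j = (if j \<in> JX Exo then Usp j else {undefined})" for j
  have "PiE (JX Exo) Usp = PiE UNIV W"
    unfolding W_def by (auto simp: PiE_def Pi_def extensional_def split: if_splits)
  moreover have "PiE UNIV W \<in> sets (PiM UNIV (\<lambda>_. borel :: real measure))"
    using scm unfolding is_SCM_def W_def by (intro sets_PiM_I_finite) auto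
  ultimately show ?thesis by (simp add: sets_borel_fun)
qed

lemma P3pair:
  assumes Frep: "F_rep P U Exo V Vdo Ss F" and I: "assumption_I Usp Exo Ss F"
    and s: "s \<in> Ss" and s': "s' \<in> Ss"
  shows "(AE x in mu P V s. h x s = h (T_star Usp Exo F s s' x) s') \<longleftrightarrow> C s s'"
proof -
  define EE where "EE = PiE (JX Exo) Usp"
  have Fm: "(\<lambda>(s, u). F s u) \<in> borel \<Otimes>\<^sub>M PiM (JX Exo) (\<lambda>_. borel) \<rightarrow>\<^sub>M MX"
    using Frep unfolding F_rep_def by blast
  have aeX: "AE \<omega> in Q s. Xof V \<omega> = F s (UX Exo U \<omega>)"
    using Frep unfolding F_rep_def by (subst AE_Q[OF s]) (auto elim!: eventually_mono)
  have aeXd: "AE \<omega> in Q s. Xof (Vdo s') \<omega> = F s' (UX Exo U \<omega>)"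
  proof -
    have "AE \<omega> in P. Xof (Vdo s') \<omega> = F s' (UX Exo U \<omega>)" using Frep s' unfolding F_rep_def by blast
    thus ?thesis by (subst AE_Q[OF s]) (auto elim!: eventually_mono)
  qed
  have inj: "inj_on (F s) EE" using I s unfolding assumption_I_def EE_def by blast
  have Teq: "T_star Usp Exo F s s' (F s u) = F s' u" if "u \<in> EE" for u
    unfolding T_star_def EE_def[symmetric] using the_inv_into_f_f[OF inj that] by simp
  have aeU: "AE \<omega> in Q s. UX Exo U \<omega> \<in> EE"
    using UXE unfolding EE_def by (intro AE_I2) simp
  show ?thesis
  proof
    assume H: "AE x in mu P V s. h x s = h (T_star Usp Exo F s s' x) s'"
    have "AE \<omega> in Q s. h (Xof V \<omega>) s = h (T_star Usp Exo F s s' (Xof V \<omega>)) s'"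
      using H unfolding mu_def by (rule AE_distrD[OF XQ])
    then show "C s s'" unfolding C_def using aeX aeXd aeU
      by eventually_elim (simp add: Teq)
  next
    assume Cs: "C s s'"
    define fs where "fs t u = F t (restrict u (JX Exo))" for t and u :: "'j \<Rightarrow> real"
    have fsm: "fs t \<in> (borel :: ('j \<Rightarrow> real) measure) \<rightarrow>\<^sub>M MX" for t
    proof -
      have "(\<lambda>u. (t, restrict u (JX Exo))) \<in> PiM UNIV (\<lambda>_. borel) \<rightarrow>\<^sub>M borel \<Otimes>\<^sub>M PiM (JX Exo) (\<lambda>_. borel)"
        by (intro measurable_Pair measurable_const measurable_restrict_subset) auto
      from measurable_compose[OF this Fm]
      have "fs t \<in> PiM UNIV (\<lambda>_. borel) \<rightarrow>\<^sub>M MX" unfolding fs_def[abs_def] by simp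
      thus ?thesis using sets_borel_fun by (simp add: measurable_cong_sets[OF sets_borel_fun refl])
    qed
    have fsm': "fs t \<in> (borel :: ('j \<Rightarrow> real) measure) \<rightarrow>\<^sub>M (borel :: ('n \<Rightarrow> real) measure)" for t
      using fsm[of t] by (simp add: measurable_cong_sets[OF refl sets_borel_fun] MX_def)
    have UXb: "UX Exo U \<in> Q s \<rightarrow>\<^sub>M (borel :: ('j \<Rightarrow> real) measure)"
    proof -
      have "UX Exo U \<in> P \<rightarrow>\<^sub>M PiM UNIV (\<lambda>_. borel)"
        using measurable_compose[OF UX_meas incl_meas] by simp
      thus ?thesis by (simp add: measurable_cong_sets[OF refl sets_borel_fun] meas_Q)
    qed
    define D where "D = EE \<inter> {u \<in> space borel. h (fs s u) s = h (fs s' u) s'}"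
    have DS: "D \<in> sets borel"
      unfolding D_def using EE_sets[folded EE_def]
      by (intro sets.Int eq_sets h_comp fsm measurable_const) auto
    define BM where "BM = distr (Q s) (borel :: ('j \<Rightarrow> real) measure) (UX Exo U)"
    have BMp: "prob_space BM" unfolding BM_def
      by (rule prob_space.prob_space_distr[OF Q_ps[OF s] UXb])
    have BMf: "finite_measure BM" using BMp by (simp add: prob_space_def)
    have sBM: "sets BM = sets borel" "space BM = UNIV" unfolding BM_def by auto
    have aeD: "AE u in BM. u \<in> D"
    proof -
      have "AE \<omega> in Q s. UX Exo U \<omega> \<in> D"
        using Cs[unfolded C_def] aeX aeXd aeU
      proof eventually_elim
        case (elim \<omega>)
        have r: "restrict (UX Exo U \<omega>) (JX Exo) = UX Exo U \<omega>" using elim(4) unfolding EE_def by (rule PiE_restrict)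
        show ?case using elim unfolding D_def fs_def by (simp add: r)
      qed
      thus ?thesis unfolding BM_def using DS by (subst AE_distr_iff[OF UXb]) auto
    qed
    have D0: "measure BM (UNIV - D) = 0"
    proof -
      have "emeasure BM (UNIV - D) = 0"
        using aeD DS sBM by (subst AE_iff_measurable[symmetric]) auto
      thus ?thesis by (simp add: measure_def)
    qed
    obtain B where B: "B \<in> sets borel" "B \<subseteq> fs s ` D" "measure BM (UNIV - fs s -` B) = 0"
      using lusin_image[OF sBM(1) BMf fsm' DS D0] by blast
    have preS: "UNIV - fs s -` B \<in> sets (borel :: ('j \<Rightarrow> real) measure)"
      using measurable_sets[OF fsm' B(1)] by auto
    have "AE \<omega> in Q s. fs s (UX Exo U \<omega>) \<in> B"
    proof -
      have "emeasure BM (UNIV - fs s -` B) = 0"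
        using B(3) finite_measure.emeasure_eq_measure[OF BMf] by simp
      hence "AE u in BM. u \<in> fs s -` B"
        using preS sBM by (subst AE_iff_measurable[of "UNIV - fs s -` B"]) auto
      moreover have vS: "{x. fs s x \<in> B} \<in> sets borel"
        using measurable_sets[OF fsm' B(1)] by (simp add: vimage_def)
      ultimately show ?thesis unfolding BM_def
        by (subst (asm) AE_distr_iff[OF UXb]) (auto simp: vS)
    qed
    hence "AE \<omega> in Q s. Xof V \<omega> \<in> B"
      using aeX aeU
    proof eventually_elim
      case (elim \<omega>)
      have r: "restrict (UX Exo U \<omega>) (JX Exo) = UX Exo U \<omega>" using elim(3) unfolding EE_def by (rule PiE_restrict)
      thus ?case using elim unfolding fs_def by simp
    qed
    hence aeB: "AE x in mu P V s. x \<in> B"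
      unfolding mu_def using B(1) by (subst AE_distr_iff[OF XQ]) (auto simp: MX_def sets_borel_fun)
    show "AE x in mu P V s. h x s = h (T_star Usp Exo F s s' x) s'"
      using aeB
    proof (rule eventually_mono)
      fix x assume "x \<in> B"
      then obtain u where u: "u \<in> D" "x = fs s u" using B(2) by blast
      have uE: "u \<in> EE" using u(1) unfolding D_def by blast
      have r: "restrict u (JX Exo) = u" using uE unfolding EE_def by (rule PiE_restrict)
      have "x = F s u" using u(2) r unfolding fs_def by simp
      moreover have "h (F s u) s = h (F s' u) s'" using u(1) r unfolding D_def fs_def by simp
      ultimately show "h x s = h (T_star Usp Exo F s s' x) s'" using Teq[OF uE] by simp
    qed
  qed
qed

end


theorem proposition5:
  fixes P :: "'w measure"
    and Usp :: "'j::finite \<Rightarrow> real set"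
    and U :: "'w \<Rightarrow> 'j \<Rightarrow> real"
    and Endo :: "'n::finite option \<Rightarrow> 'n option set"
    and Exo :: "'n option \<Rightarrow> 'j set"
    and G :: "'n option \<Rightarrow> ('n option \<Rightarrow> real) \<Rightarrow> ('j \<Rightarrow> real) \<Rightarrow> real"
    and V :: "'w \<Rightarrow> 'n option \<Rightarrow> real"
    and Vdo :: "real \<Rightarrow> 'w \<Rightarrow> 'n option \<Rightarrow> real"
    and Ss :: "real set"
    and h :: "('n \<Rightarrow> real) \<Rightarrow> real \<Rightarrow> real"
  assumes scm: "is_SCM P Usp U Endo Exo G"
    and A: "assumption_A Endo Exo"
    and sol: "is_solution P U G V"
    and sol_do: "\<forall>s\<in>Ss. is_solution P U (do_S G s) (Vdo s)"
    and Ss_fin: "finite Ss"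
    and S_in: "\<forall>\<omega>\<in>space P. Sof V \<omega> \<in> Ss"
    and S_pos: "\<forall>s\<in>Ss. measure P {\<omega> \<in> space P. Sof V \<omega> = s} > 0"
    and h_meas: "(\<lambda>(x, s). h x s) \<in> borel_measurable (MX \<Otimes>\<^sub>M borel)"
  shows
    "(cf_fair P V Vdo Ss h \<longleftrightarrow>
        (\<forall>s\<in>Ss. \<forall>s'\<in>Ss. AE p in pi_star P V Vdo s s'. h (fst p) s = h (snd p) s'))
     \<and> (assumption_RE P U Endo Exo \<longrightarrow>
        (cf_fair P V Vdo Ss h \<longleftrightarrow>
          (\<forall>s\<in>Ss. \<forall>s'\<in>Ss. s < s' \<longrightarrow>
             (AE p in pi_star P V Vdo s s'. h (fst p) s = h (snd p) s'))))
     \<and> (\<forall>F. F_rep P U Exo V Vdo Ss F \<and> assumption_I Usp Exo Ss F \<longrightarrow>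
        (cf_fair P V Vdo Ss h \<longleftrightarrow>
          (\<forall>s\<in>Ss. \<forall>s'\<in>Ss. AE x in mu P V s. h x s = h (T_star Usp Exo F s s' x) s')))
     \<and> (\<forall>F. F_rep P U Exo V Vdo Ss F \<and> assumption_I Usp Exo Ss F \<and> assumption_RE P U Endo Exo \<longrightarrow>
        (cf_fair P V Vdo Ss h \<longleftrightarrow>
          (\<forall>s\<in>Ss. \<forall>s'\<in>Ss. s < s' \<longrightarrow>
             (AE x in mu P V s. h x s = h (T_star Usp Exo F s s' x) s'))))"
  proof -
  interpret p5 P Usp U Endo Exo G V Vdo Ss h
    by (rule p5.intro[OF scm A sol sol_do Ss_fin S_in S_pos h_meas])
  have E1: "(\<forall>s\<in>Ss. \<forall>s'\<in>Ss. AE p in pi_star P V Vdo s s'. h (fst p) s = h (snd p) s')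
      \<longleftrightarrow> (\<forall>s\<in>Ss. \<forall>s'\<in>Ss. C s s')" using P1pair by auto
  have E2: "(\<forall>s\<in>Ss. \<forall>s'\<in>Ss. s < s' \<longrightarrow> (AE p in pi_star P V Vdo s s'. h (fst p) s = h (snd p) s'))
      \<longleftrightarrow> (\<forall>s\<in>Ss. \<forall>s'\<in>Ss. s < s' \<longrightarrow> C s s')" using P1pair by auto
  have SY: "(\<forall>s\<in>Ss. \<forall>s'\<in>Ss. C s s') \<longleftrightarrow> (\<forall>s\<in>Ss. \<forall>s'\<in>Ss. s < s' \<longrightarrow> C s s')"
    if RE: "assumption_RE P U Endo Exo"
  proof
    assume H: "\<forall>s\<in>Ss. \<forall>s'\<in>Ss. s < s' \<longrightarrow> C s s'"
    show "\<forall>s\<in>Ss. \<forall>s'\<in>Ss. C s s'"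
    proof (intro ballI)
      fix s s' assume s: "s \<in> Ss" and s': "s' \<in> Ss"
      consider "s < s'" | "s = s'" | "s' < s" by linarith
      then show "C s s'"
      proof cases
        case 1 thus ?thesis using H s s' by blast
      next
        case 2 thus ?thesis using C_diag s by simp
      next
        case 3 thus ?thesis using H s s' C_sym[OF RE s' s] by blast
      qed
    qed
  qed blast
  have E3: "(\<forall>s\<in>Ss. \<forall>s'\<in>Ss. AE x in mu P V s. h x s = h (T_star Usp Exo F s s' x) s')
      \<longleftrightarrow> (\<forall>s\<in>Ss. \<forall>s'\<in>Ss. C s s')"
    if "F_rep P U Exo V Vdo Ss F" "assumption_I Usp Exo Ss F" for F
    using P3pair[OF that] by auto
  have E4: "(\<forall>s\<in>Ss. \<forall>s'\<in>Ss. s < s' \<longrightarrow> (AE x in mu P V s. h x s = h (T_star Usp Exo F s s' x) s'))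
      \<longleftrightarrow> (\<forall>s\<in>Ss. \<forall>s'\<in>Ss. s < s' \<longrightarrow> C s s')"
    if "F_rep P U Exo V Vdo Ss F" "assumption_I Usp Exo Ss F" for F
    using P3pair[OF that] by auto
  show ?thesis
    using P1 E1 E2 E3 E4 SY by blast
qed

end
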